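(* Every vector configuration $V$ has a subconfiguration $W$ with $\operatorname{rank}(W)\le 2\,\mathrm{DD}(V)$, $\mathrm{DD}(W)=\mathrm{DD}(V)$ and $\mathrm{DD}(V\setminus W)=0$.
   Context: A vector configuration is a finite family (repetitions allowed) $V$ of vectors in $\mathbb{R}^r$; a subconfiguration is a subfamily, $V\setminus W$ is the complementary subfamily, $\operatorname{rank}(W)=\dim\operatorname{lin}(W)$, and cardinalities count multiplicities. The covector discrepancy is $\mathrm{DD}(W)=\max_f\big|\,|\{w\in W: f(w)>0\}|-|\{w\in W:f(w)<0\}|\,\big|$, the maximum over all linear functionals $f$ on $\mathbb{R}^r$. *)

theory Defs
  imports "HOL-Analysis.Analysis"
begin

text \<open>A vector configuration is a finite family, modelled as a map V from a finite
index set I (repetitions allowed) into a Euclidean space; a subconfiguration is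
the restriction to a subset J of I, and the complementary subconfiguration is I - J.\<close>

definition pos_count :: "('i \<Rightarrow> 'a::euclidean_space) \<Rightarrow> 'i set \<Rightarrow> ('a \<Rightarrow> real) \<Rightarrow> nat" where
  "pos_count V J f = card {j \<in> J. f (V j) > 0}"

definition neg_count :: "('i \<Rightarrow> 'a::euclidean_space) \<Rightarrow> 'i set \<Rightarrow> ('a \<Rightarrow> real) \<Rightarrow> nat" where
  "neg_count V J f = card {j \<in> J. f (V j) < 0}"

definition DD :: "('i \<Rightarrow> 'a::euclidean_space) \<Rightarrow> 'i set \<Rightarrow> nat" where
  "DD V J = Max {nat \<bar>int (pos_count V J f) - int (neg_count V J f)\<bar> | f. linear f}"

definition rank_conf :: "('i \<Rightarrow> 'a::euclidean_space) \<Rightarrow> 'i set \<Rightarrow> nat" where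
  "rank_conf V J = dim (span (V ` J))"

end

theory Submission
  imports Defs
begin

definition Dv :: "('i \<Rightarrow> 'a::euclidean_space) \<Rightarrow> 'i set \<Rightarrow> ('a \<Rightarrow> real) \<Rightarrow> int" where
  "Dv V J f = int (pos_count V J f) - int (neg_count V J f)"

lemma Dv_union:
  assumes "finite A" "finite B" "A \<inter> B = {}"
  shows "Dv V (A \<union> B) f = Dv V A f + Dv V B f"
proof -
  have p: "{j \<in> A \<union> B. f (V j) > 0} = {j \<in> A. f (V j) > 0} \<union> {j \<in> B. f (V j) > 0}" by auto
  have n: "{j \<in> A \<union> B. f (V j) < 0} = {j \<in> A. f (V j) < 0} \<union> {j \<in> B. f (V j) < 0}" by auto
  show ?thesis unfolding Dv_def pos_count_def neg_count_def p n
    using assms by (subst card_Un_disjoint, auto)+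
qed

lemma Dv_empty[simp]: "Dv V {} f = 0"
  by (simp add: Dv_def pos_count_def neg_count_def)

lemma Dv_neg: "Dv V J (\<lambda>x. - f x) = - Dv V J f"
  by (simp add: Dv_def pos_count_def neg_count_def)

lemma Dv_cong:
  assumes "\<And>j. j \<in> J \<Longrightarrow> sgn (f (V j)) = sgn (g (V j))"
  shows "Dv V J f = Dv V J g"
proof -
  have s1: "\<And>x::real. (x > 0) = (sgn x = 1)" and s2: "\<And>x::real. (x < 0) = (sgn x = -1)"
    by (auto simp: sgn_real_def)
  have "{j \<in> J. f (V j) > 0} = {j \<in> J. g (V j) > 0}"
    unfolding s1 using assms by auto
  moreover have "{j \<in> J. f (V j) < 0} = {j \<in> J. g (V j) < 0}"
    unfolding s2 using assms by auto
  ultimately show ?thesis by (simp add: Dv_def pos_count_def neg_count_def)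
qed

lemma Dv_bound:
  assumes "finite J"
  shows "\<bar>Dv V J f\<bar> \<le> int (card J)"
proof -
  have "pos_count V J f + neg_count V J f = card ({j \<in> J. f (V j) > 0} \<union> {j \<in> J. f (V j) < 0})"
    unfolding pos_count_def neg_count_def using assms by (subst card_Un_disjoint, auto)
  also have "\<dots> \<le> card J" using assms by (intro card_mono) auto
  finally show ?thesis unfolding Dv_def by linarith
qed

lemma DD_alt: "DD V J = Max {nat \<bar>Dv V J f\<bar> | f. linear f}"
  unfolding DD_def Dv_def by simp

lemma DD_set_finite:
  assumes "finite J"
  shows "finite {nat \<bar>Dv V J f\<bar> | f. linear f}"
proof (rule finite_subset[of _ "{0..card J}"])
  show "{nat \<bar>Dv V J f\<bar> | f. linear f} \<subseteq> {0..card J}"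
    using Dv_bound[OF assms] by (auto simp: nat_le_iff)
qed simp

lemma DD_ge:
  assumes "finite J" "linear f"
  shows "nat \<bar>Dv V J f\<bar> \<le> DD V J"
  unfolding DD_alt using assms DD_set_finite[OF assms(1)] by (intro Max_ge) auto

lemma DD_attained:
  assumes "finite J"
  obtains f where "linear f" "DD V J = nat \<bar>Dv V J f\<bar>"
proof -
  have "DD V J \<in> {nat \<bar>Dv V J f\<bar> | f. linear f}"
    unfolding DD_alt using DD_set_finite[OF assms]
    by (intro Max_in) (auto intro!: exI[of _ "\<lambda>x. 0"] simp: linear_zero)
  then show ?thesis using that by auto
qed

lemma lin_cmul: fixes f :: "'a::real_vector \<Rightarrow> real" shows "linear f \<Longrightarrow> linear (\<lambda>x. c * f x)"
  using real_vector.linear_compose_scale_right[of f c] by simp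

lemma lin_add: "linear f \<Longrightarrow> linear g \<Longrightarrow> linear (\<lambda>x. f x + g x)"
  by (rule real_vector.linear_compose_add)

lemma lin_neg: "linear f \<Longrightarrow> linear (\<lambda>x. - f x)"
  by (rule real_vector.linear_compose_neg)

lemma lin_inner: "linear (\<lambda>x. z \<bullet> x)"
  by (simp add: bounded_linear.linear bounded_linear_inner_right)

lemma Dv_zero_part:
  fixes V :: "'i \<Rightarrow> 'a::euclidean_space" and f :: "'a \<Rightarrow> real"
  assumes "\<And>j. j \<in> J \<Longrightarrow> f (V j) = 0"
  shows "Dv V J f = 0"
proof -
  have e1: "{j \<in> J. f (V j) > 0} = {}" and e2: "{j \<in> J. f (V j) < 0} = {}" using assms by auto
  show ?thesis unfolding Dv_def pos_count_def neg_count_def by (simp only: e1 e2)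
qed

lemma Dv_split:
  assumes "finite J"
  shows "Dv V J f = Dv V {j \<in> J. P j} f + Dv V {j \<in> J. \<not> P j} f"
proof -
  have "J = {j \<in> J. P j} \<union> {j \<in> J. \<not> P j}" by auto
  then have "Dv V J f = Dv V ({j \<in> J. P j} \<union> {j \<in> J. \<not> P j}) f" by simp
  also have "\<dots> = Dv V {j \<in> J. P j} f + Dv V {j \<in> J. \<not> P j} f"
    using assms by (intro Dv_union) auto
  finally show ?thesis .
qed

lemma Dv_nonzero: "finite J \<Longrightarrow> Dv V J f = Dv V {j \<in> J. f (V j) \<noteq> 0} f"
  using Dv_split[of J V f "\<lambda>j. f (V j) \<noteq> 0"] Dv_zero_part[of "{j \<in> J. \<not> f (V j) \<noteq> 0}" f V]
  by simp

lemma small_eps: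
  fixes V :: "'i \<Rightarrow> 'a::euclidean_space" and h g :: "'a \<Rightarrow> real"
  assumes "finite J"
  shows "\<exists>\<epsilon>>0. \<forall>j\<in>J. h (V j) \<noteq> 0 \<longrightarrow> \<epsilon> * \<bar>g (V j)\<bar> < \<bar>h (V j)\<bar>"
proof -
  define S where "S = insert 1 ((\<lambda>j. \<bar>h (V j)\<bar> / (\<bar>g (V j)\<bar> + 1)) ` {j \<in> J. h (V j) \<noteq> 0})"
  have fS: "finite S" using assms by (simp add: S_def)
  have pS: "\<forall>s\<in>S. s > 0" by (auto simp: S_def)
  define \<epsilon> where "\<epsilon> = Min S"
  have "\<epsilon> \<in> S" unfolding \<epsilon>_def using fS by (intro Min_in) (auto simp: S_def)
  then have ep: "\<epsilon> > 0" using pS by auto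
  have "\<epsilon> * \<bar>g (V j)\<bar> < \<bar>h (V j)\<bar>" if "j \<in> J" "h (V j) \<noteq> 0" for j
  proof -
    have "\<epsilon> \<le> \<bar>h (V j)\<bar> / (\<bar>g (V j)\<bar> + 1)" unfolding \<epsilon>_def using fS that
      by (intro Min_le) (auto simp: S_def)
    then have "\<epsilon> * (\<bar>g (V j)\<bar> + 1) \<le> \<bar>h (V j)\<bar>"
      by (simp add: pos_le_divide_eq add_pos_nonneg)
    then show ?thesis using ep by (simp add: algebra_simps)
  qed
  then show ?thesis using ep by blast
qed

lemma LEX:
  assumes "finite J"
  shows "\<exists>\<epsilon>>0. Dv V J (\<lambda>x. h x + \<epsilon> * g x) = Dv V J h + Dv V {j \<in> J. h (V j) = 0} g"
proof -
  obtain \<epsilon> where ep: "\<epsilon> > 0" and sm: "\<forall>j\<in>J. h (V j) \<noteq> 0 \<longrightarrow> \<epsilon> * \<bar>g (V j)\<bar> < \<bar>h (V j)\<bar>"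
    using small_eps[OF assms] by blast
  let ?f = "\<lambda>x. h x + \<epsilon> * g x"
  have "Dv V J ?f = Dv V {j \<in> J. h (V j) \<noteq> 0} ?f + Dv V {j \<in> J. \<not> h (V j) \<noteq> 0} ?f"
    using Dv_split[OF assms] .
  also have "Dv V {j \<in> J. h (V j) \<noteq> 0} ?f = Dv V {j \<in> J. h (V j) \<noteq> 0} h"
  proof (rule Dv_cong)
    fix j assume j: "j \<in> {j \<in> J. h (V j) \<noteq> 0}"
    then have "\<epsilon> * \<bar>g (V j)\<bar> < \<bar>h (V j)\<bar>" using sm by auto
    moreover have "\<bar>\<epsilon> * g (V j)\<bar> = \<epsilon> * \<bar>g (V j)\<bar>" using ep by (simp add: abs_mult)
    ultimately show "sgn (?f (V j)) = sgn (h (V j))"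
      by (auto simp: sgn_real_def abs_if split: if_splits)
  qed
  also have "Dv V {j \<in> J. \<not> h (V j) \<noteq> 0} ?f = Dv V {j \<in> J. h (V j) = 0} g"
  proof -
    have eq: "{j \<in> J. \<not> h (V j) \<noteq> 0} = {j \<in> J. h (V j) = 0}" by simp
    show ?thesis unfolding eq using ep by (intro Dv_cong) (auto simp: sgn_mult)
  qed
  also have "Dv V {j \<in> J. h (V j) \<noteq> 0} h = Dv V J h"
    using Dv_nonzero[OF assms, of V h] by simp
  finally show ?thesis using ep by blast
qed

lemma decomp:
  assumes "finite J" "linear h"
  shows "nat \<bar>Dv V J h\<bar> + DD V {j \<in> J. h (V j) = 0} \<le> DD V J"
proof -
  let ?Z = "{j \<in> J. h (V j) = 0}"
  have fZ: "finite ?Z" using assms by simp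
  obtain g where g: "linear g" "DD V ?Z = nat \<bar>Dv V ?Z g\<bar>" using DD_attained[OF fZ] by blast
  obtain h' where h': "linear h'" "Dv V J h' = \<bar>Dv V J h\<bar>" "\<And>x. h' x = 0 \<longleftrightarrow> h x = 0"
  proof (cases "Dv V J h \<ge> 0")
    case True then show ?thesis using that[of h] assms by auto
  next
    case False then show ?thesis using that[of "\<lambda>x. - h x"] assms lin_neg Dv_neg by auto
  qed
  have Zeq: "{j \<in> J. h' (V j) = 0} = ?Z" using h'(3) by auto
  obtain g' where g': "linear g'" "Dv V ?Z g' = \<bar>Dv V ?Z g\<bar>"
  proof (cases "Dv V ?Z g \<ge> 0")
    case True then show ?thesis using that[of g] g by auto
  next
    case False then show ?thesis using that[of "\<lambda>x. - g x"] g lin_neg Dv_neg by auto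
  qed
  obtain \<epsilon> where ep: "\<epsilon> > 0" "Dv V J (\<lambda>x. h' x + \<epsilon> * g' x) = Dv V J h' + Dv V {j \<in> J. h' (V j) = 0} g'"
    using LEX[OF assms(1)] by blast
  have lin: "linear (\<lambda>x. h' x + \<epsilon> * g' x)" using h'(1) g'(1) by (intro lin_add lin_cmul)
  have "nat \<bar>Dv V J h\<bar> + DD V ?Z = nat (Dv V J (\<lambda>x. h' x + \<epsilon> * g' x))"
    using ep(2) h'(2) g'(2) g(2) Zeq by (simp add: nat_add_distrib)
  also have "\<dots> \<le> nat \<bar>Dv V J (\<lambda>x. h' x + \<epsilon> * g' x)\<bar>" by simp
  also have "\<dots> \<le> DD V J" by (rule DD_ge[OF assms(1) lin])
  finally show ?thesis .
qed


lemma orth_func: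
  fixes B :: "'a::euclidean_space set"
  assumes "x \<notin> span B"
  obtains g :: "'a \<Rightarrow> real" where "linear g" "\<forall>b\<in>span B. g b = 0" "g x \<noteq> 0"
proof -
  obtain y z where yz: "y \<in> span B" "\<And>w. w \<in> span B \<Longrightarrow> orthogonal z w" "x = y + z"
    using orthogonal_subspace_decomp_exists[of B x] by blast
  have "z \<noteq> 0" using yz assms by auto
  have "(\<lambda>v. z \<bullet> v) x = z \<bullet> z" using yz(2)[OF yz(1)] yz(3)
    by (simp add: inner_add_right orthogonal_def)
  then have "(\<lambda>v. z \<bullet> v) x \<noteq> 0" using \<open>z \<noteq> 0\<close> by simp
  moreover have "\<forall>b\<in>span B. (\<lambda>v. z \<bullet> v) b = 0" using yz(2) by (simp add: orthogonal_def)
  ultimately show ?thesis by (intro that[of "\<lambda>v. z \<bullet> v"] lin_inner) auto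
qed

lemma lin_cmul2: fixes f :: "'a::real_vector \<Rightarrow> real" shows "linear f \<Longrightarrow> linear (\<lambda>x. f x * c)"
  using lin_cmul[of f c] by (simp add: mult.commute)

lemma gen_functional:
  fixes B :: "'a::euclidean_space set" and X :: "'a set"
  assumes "finite X" "\<forall>x\<in>X. x \<notin> span B"
  shows "\<exists>h::'a\<Rightarrow>real. linear h \<and> (\<forall>b\<in>span B. h b = 0) \<and> (\<forall>x\<in>X. h x \<noteq> 0)"
  using assms
proof (induction X rule: finite_induct)
  case empty
  then show ?case by (intro exI[of _ "\<lambda>x. 0"]) (simp add: linear_zero)
next
  case (insert x X)
  have "\<exists>h::'a\<Rightarrow>real. linear h \<and> (\<forall>b\<in>span B. h b = 0) \<and> (\<forall>x\<in>X. h x \<noteq> 0)"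
    using insert.IH insert.prems by auto
  then obtain h :: "'a \<Rightarrow> real" where h: "linear h" "\<forall>b\<in>span B. h b = 0" "\<forall>x\<in>X. h x \<noteq> 0" by blast
  obtain g :: "'a \<Rightarrow> real" where g: "linear g" "\<forall>b\<in>span B. g b = 0" "g x \<noteq> 0"
    using orth_func insert.prems by blast
  define T where "T = insert 0 ((\<lambda>x'. - h x' / g x') ` (insert x X))"
  have "finite T" using insert.hyps by (simp add: T_def)
  then obtain t where t: "t \<notin> T" using ex_new_if_finite[OF infinite_UNIV_char_0] by blast
  define h' where "h' = (\<lambda>v. h v + t * g v)"
  have "linear h'" unfolding h'_def using h g by (intro lin_add lin_cmul)
  moreover have "\<forall>b\<in>span B. h' b = 0" using h g by (simp add: h'_def)
  moreover have "h' x' \<noteq> 0" if "x' \<in> insert x X" for x'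
  proof (cases "g x' = 0")
    case True
    then have "x' \<in> X" using that g by auto
    then show ?thesis using h True by (simp add: h'_def)
  next
    case False
    show ?thesis
    proof
      assume "h' x' = 0"
      then have "h x' + t * g x' = 0" by (simp add: h'_def)
      then have "t = - h x' / g x'" using False by (metis add_eq_0_iff nonzero_mult_div_cancel_right)
      then have "t \<in> T" using that by (auto simp: T_def)
      then show False using t by simp
    qed
  qed
  ultimately show ?case by blast
qed

lemma proj_exists:
  fixes B :: "'a::euclidean_space set"
  obtains p :: "'a \<Rightarrow> 'a" where "linear p" "\<And>x. x - p x \<in> span B" "\<And>x. p x = 0 \<longleftrightarrow> x \<in> span B"
proof -
  obtain T where T: "0 \<notin> T" "T \<subseteq> span B" "pairwise orthogonal T" "independent T"
    "card T = dim (span B)" "span T = span B"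
    using orthogonal_basis_subspace subspace_span by blast
  have fT: "finite T" using T(4) by (rule finiteI_independent)
  define p where "p = (\<lambda>x. x - (\<Sum>b\<in>T. (b \<bullet> x / (b \<bullet> b)) *\<^sub>R b))"
  have lin: "linear p"
  proof (rule linearI)
    fix x y show "p (x + y) = p x + p y"
      unfolding p_def inner_add_right add_divide_distrib scaleR_add_left sum.distrib by simp
  next
    fix c x show "p (c *\<^sub>R x) = c *\<^sub>R p x"
      unfolding p_def inner_scaleR_right scaleR_diff_right scaleR_sum_right by (simp add: scaleR_scaleR)
  qed
  have diff: "x - p x \<in> span B" for x
    unfolding p_def using T(2) by (simp add: span_sum span_mul span_base subsetD)
  have orth: "orthogonal w (p x)" if "w \<in> span B" for w x
    unfolding p_def using Gram_Schmidt_step[OF T(3), of w x] that T(6) by simp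
  have "p x = 0 \<longleftrightarrow> x \<in> span B" for x
  proof
    assume "p x = 0" then show "x \<in> span B" using diff[of x] by simp
  next
    assume x: "x \<in> span B"
    then have "p x \<in> span B" using span_diff[OF x diff[of x]] by simp
    then have "orthogonal (p x) (p x)" using orth by blast
    then show "p x = 0" by (simp add: orthogonal_def)
  qed
  then show ?thesis using that lin diff by blast
qed


lemma pig_sorted:
  fixes u v w t :: real
  assumes "u < v" "v < w"
  shows "\<exists>\<sigma> \<phi>. \<sigma> \<in> {u,v,w} \<and> \<phi> \<in> {u,v,w} \<and> \<sigma> \<noteq> \<phi> \<and> (\<phi> - \<sigma>)\<^sup>2 \<le> (\<phi> - t)\<^sup>2"
proof (cases "t \<le> v")
  case True
  have "(w - v)\<^sup>2 \<le> (w - t)\<^sup>2" using True assms by (intro power_mono) auto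
  then show ?thesis using assms by (intro exI[of _ v] exI[of _ w]) auto
next
  case False
  have "(v - u)\<^sup>2 \<le> (t - u)\<^sup>2" using False assms by (intro power_mono) auto
  then have "(u - v)\<^sup>2 \<le> (u - t)\<^sup>2" by (simp add: power2_commute)
  then show ?thesis using assms by (intro exI[of _ v] exI[of _ u]) auto
qed

lemma pig:
  fixes u v w t :: real
  assumes "u \<noteq> v" "v \<noteq> w" "u \<noteq> w"
  shows "\<exists>\<sigma> \<phi>. \<sigma> \<in> {u,v,w} \<and> \<phi> \<in> {u,v,w} \<and> \<sigma> \<noteq> \<phi> \<and> (\<phi> - \<sigma>)\<^sup>2 \<le> (\<phi> - t)\<^sup>2"
proof -
  have s: "{u,v,w} = {v,u,w}" "{u,v,w} = {u,w,v}" "{u,v,w} = {w,v,u}" "{u,v,w} = {v,w,u}" "{u,v,w} = {w,u,v}"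
    by auto
  consider "u < v" "v < w" | "v < u" "u < w" | "u < w" "w < v" | "w < v" "v < u" | "v < w" "w < u" | "w < u" "u < v"
    using assms by linarith
  then show ?thesis
  proof cases
    case 1 then show ?thesis using pig_sorted by blast
  next
    case 2 then show ?thesis using pig_sorted[of v u w t] s by metis
  next
    case 3 then show ?thesis using pig_sorted[of u w v t] s by metis
  next
    case 4 then show ?thesis using pig_sorted[of w v u t] s by metis
  next
    case 5 then show ?thesis using pig_sorted[of v w u t] s by metis
  next
    case 6 then show ?thesis using pig_sorted[of w u v t] s by metis
  qed
qed

definition onl :: "'a::real_vector \<Rightarrow> 'a \<Rightarrow> 'a \<Rightarrow> bool" where
  "onl y z x \<longleftrightarrow> (\<exists>t. x = y + t *\<^sub>R (z - y))"

definition dd :: "'a::real_inner \<Rightarrow> 'a \<Rightarrow> 'a \<Rightarrow> real" where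
  "dd x y z = (x - y) \<bullet> (x - y) - ((x - y) \<bullet> (z - y))\<^sup>2 / ((z - y) \<bullet> (z - y))"

lemma kelly_step:
  fixes x y z :: "'a::euclidean_space"
  assumes yz: "y \<noteq> z" and nx: "\<not> onl y z x" and sf: "\<sigma> \<noteq> \<phi>"
    and ineq: "(\<phi> - \<sigma>)\<^sup>2 \<le> (\<phi> - ((x - y) \<bullet> (z - y)) / ((z - y) \<bullet> (z - y)))\<^sup>2"
  defines "pn \<equiv> y + \<sigma> *\<^sub>R (z - y)" and "pf \<equiv> y + \<phi> *\<^sub>R (z - y)"
  shows "\<not> onl x pf pn" "x \<noteq> pf" "dd pn x pf < dd x y z"
proof -
  define e where "e = z - y"
  define E where "E = e \<bullet> e"
  have E: "E > 0" using yz by (simp add: E_def e_def)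
  define t0 where "t0 = ((x - y) \<bullet> e) / E"
  define n where "n = x - y - t0 *\<^sub>R e"
  have ne: "n \<bullet> e = 0" using E by (simp add: n_def t0_def E_def inner_diff_left)
  have n0: "n \<noteq> 0"
  proof
    assume "n = 0"
    then have "x = y + t0 *\<^sub>R (z - y)" by (simp add: n_def e_def algebra_simps)
    then show False using nx by (auto simp: onl_def)
  qed
  define N where "N = n \<bullet> n"
  have N: "N > 0" using n0 by (simp add: N_def)
  have xy: "x - y = t0 *\<^sub>R e + n" by (simp add: n_def)
  define a where "a = \<sigma> - t0"
  define b where "b = \<phi> - t0"
  have pnx: "pn - x = a *\<^sub>R e - n" by (simp add: pn_def n_def a_def e_def algebra_simps)
  have pfx: "pf - x = b *\<^sub>R e - n" by (simp add: pf_def n_def b_def e_def algebra_simps)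
  have ab: "a \<noteq> b" using sf by (simp add: a_def b_def)
  have ineq': "(b - a)\<^sup>2 \<le> b\<^sup>2" using ineq by (simp add: a_def b_def t0_def e_def E_def)
  have en: "e \<bullet> n = 0" using ne by (simp add: inner_commute)
  show "\<not> onl x pf pn"
  proof
    assume "onl x pf pn"
    then obtain s where s: "pn = x + s *\<^sub>R (pf - x)" by (auto simp: onl_def)
    then have "pn - x = s *\<^sub>R (pf - x)" by simp
    then have eq: "a *\<^sub>R e - n = s *\<^sub>R (b *\<^sub>R e - n)" using pnx pfx by simp
    then have "(a *\<^sub>R e - n) \<bullet> n = (s *\<^sub>R (b *\<^sub>R e - n)) \<bullet> n" by simp
    then have "- N = - s * N" by (simp add: inner_diff_left en N_def)
    then have "s = 1" using N by simp
    then have "a *\<^sub>R e = b *\<^sub>R e" using eq by simp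
    then have "a = b" using E by (simp add: E_def)
    then show False using ab by simp
  qed
  show "x \<noteq> pf"
  proof
    assume "x = pf"
    then have "(b *\<^sub>R e - n) \<bullet> n = 0" using pfx by simp
    then show False using N by (simp add: inner_diff_left en N_def)
  qed
  have d1: "dd x y z = N"
  proof -
    have "(x - y) \<bullet> (x - y) = t0\<^sup>2 * E + N"
      unfolding xy by (simp add: inner_add_left inner_add_right en ne N_def E_def power2_eq_square)
    moreover have "(x - y) \<bullet> (z - y) = t0 * E"
      unfolding xy e_def[symmetric] by (simp add: inner_add_left ne E_def)
    ultimately show ?thesis using E by (simp add: dd_def e_def[symmetric] E_def[symmetric] power2_eq_square)
  qed
  have A: "(pn - x) \<bullet> (pn - x) = a\<^sup>2 * E + N"
    unfolding pnx by (simp add: inner_diff_left inner_diff_right en ne N_def E_def power2_eq_square)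
  have B: "(pf - x) \<bullet> (pf - x) = b\<^sup>2 * E + N"
    unfolding pfx by (simp add: inner_diff_left inner_diff_right en ne N_def E_def power2_eq_square)
  have C: "(pn - x) \<bullet> (pf - x) = a * b * E + N"
    unfolding pnx pfx by (simp add: inner_diff_left inner_diff_right en ne N_def E_def)
  have Bp: "b\<^sup>2 * E + N > 0" using E N by (simp add: add_nonneg_pos)
  have key: "E * (a\<^sup>2 - 2 * a * b) \<le> 0"
  proof -
    have "a\<^sup>2 - 2 * a * b \<le> 0" using ineq' by (simp add: power2_eq_square algebra_simps)
    then show ?thesis using E by (simp add: mult_nonneg_nonpos less_imp_le)
  qed
  have "dd pn x pf = (a\<^sup>2 * E + N) - (a * b * E + N)\<^sup>2 / (b\<^sup>2 * E + N)"
    by (simp add: dd_def A B C)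
  also have "\<dots> < N"
  proof -
    have "(a\<^sup>2 * E + N) * (b\<^sup>2 * E + N) - (a * b * E + N)\<^sup>2 = E * N * (a\<^sup>2 + b\<^sup>2 - 2 * a * b)"
      by (simp add: power2_eq_square algebra_simps)
    also have "\<dots> < N * (b\<^sup>2 * E + N)"
    proof -
      have "E * N * (a\<^sup>2 + b\<^sup>2 - 2 * a * b) = N * (b\<^sup>2 * E) + N * (E * (a\<^sup>2 - 2 * a * b))"
        by (simp add: algebra_simps)
      also have "\<dots> \<le> N * (b\<^sup>2 * E)" using key N by (simp add: mult_nonneg_nonpos less_imp_le)
      also have "\<dots> < N * (b\<^sup>2 * E + N)" using N by simp
      finally show ?thesis .
    qed
    finally have "(a\<^sup>2 * E + N) * (b\<^sup>2 * E + N) - (a * b * E + N)\<^sup>2 < N * (b\<^sup>2 * E + N)" .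
    then show ?thesis using Bp by (simp add: field_simps)
  qed
  finally show "dd pn x pf < dd x y z" using d1 by simp
qed

lemma kelly:
  fixes Q :: "'a::euclidean_space set"
  assumes fQ: "finite Q" and Q0: "x0 \<in> Q" "y0 \<in> Q" "z0 \<in> Q" and yz0: "y0 \<noteq> z0" and nx0: "\<not> onl y0 z0 x0"
  shows "\<exists>y\<in>Q. \<exists>z\<in>Q. y \<noteq> z \<and> (\<forall>x\<in>Q. onl y z x \<longrightarrow> x = y \<or> x = z)"
proof -
  define Tr where "Tr = {(x,y,z). x \<in> Q \<and> y \<in> Q \<and> z \<in> Q \<and> y \<noteq> z \<and> \<not> onl y z x}"
  have "Tr \<subseteq> Q \<times> Q \<times> Q" by (auto simp: Tr_def)
  then have fT: "finite Tr" using fQ by (meson finite_SigmaI finite_subset)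
  have neT: "Tr \<noteq> {}" using Q0 yz0 nx0 by (auto simp: Tr_def)
  define f where "f = (\<lambda>(x::'a,y::'a,z::'a). dd x y z)"
  define m where "m = arg_min_on f Tr"
  have mT: "m \<in> Tr" and mmin: "\<not> (\<exists>t\<in>Tr. f t < f m)"
    using arg_min_if_finite[OF fT neT, of f] by (auto simp: m_def)
  obtain x y z where m: "m = (x, y, z)" by (cases m) auto
  have xyz: "x \<in> Q" "y \<in> Q" "z \<in> Q" "y \<noteq> z" "\<not> onl y z x" using mT m by (auto simp: Tr_def)
  have "\<forall>w\<in>Q. onl y z w \<longrightarrow> w = y \<or> w = z"
  proof (intro ballI impI, rule ccontr)
    fix w assume wQ: "w \<in> Q" and ow: "onl y z w" and nw: "\<not> (w = y \<or> w = z)"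
    then obtain \<tau> where \<tau>: "w = y + \<tau> *\<^sub>R (z - y)" by (auto simp: onl_def)
    have "\<tau> \<noteq> 0" using \<tau> nw by auto
    moreover have "\<tau> \<noteq> 1" using \<tau> nw by auto
    ultimately obtain \<sigma> \<phi> where sp: "\<sigma> \<in> {0,1,\<tau>}" "\<phi> \<in> {0,1,\<tau>}" "\<sigma> \<noteq> \<phi>"
      "(\<phi> - \<sigma>)\<^sup>2 \<le> (\<phi> - ((x - y) \<bullet> (z - y)) / ((z - y) \<bullet> (z - y)))\<^sup>2"
      using pig[of 0 1 \<tau> "((x - y) \<bullet> (z - y)) / ((z - y) \<bullet> (z - y))"] by auto
    have inQ: "y + c *\<^sub>R (z - y) \<in> Q" if "c \<in> {0,1,\<tau>}" for c
      using that xyz wQ \<tau> by auto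
    note st = kelly_step[OF xyz(4) xyz(5) sp(3) sp(4)]
    have "(y + \<sigma> *\<^sub>R (z - y), x, y + \<phi> *\<^sub>R (z - y)) \<in> Tr"
      using st(1,2) inQ[OF sp(1)] inQ[OF sp(2)] xyz(1) by (auto simp: Tr_def)
    moreover have "f (y + \<sigma> *\<^sub>R (z - y), x, y + \<phi> *\<^sub>R (z - y)) < f m"
      using st(3) by (simp add: f_def m)
    ultimately show False using mmin by blast
  qed
  then show ?thesis using xyz by blast
qed

lemma span2_E:
  fixes a b c :: "'a::real_vector"
  assumes "c \<in> span {a, b}"
  obtains \<alpha> \<beta> where "c = \<alpha> *\<^sub>R a + \<beta> *\<^sub>R b"
proof -
  obtain k where "c - k *\<^sub>R a \<in> span {b}" using assms span_breakdown_eq[of c a "{b}"] by auto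
  then obtain l where "c - k *\<^sub>R a = l *\<^sub>R b" by (auto simp: span_singleton)
  then have "c = k *\<^sub>R a + l *\<^sub>R b" by (simp add: algebra_simps)
  then show ?thesis using that by blast
qed

lemma span2_I:
  fixes a b :: "'a::real_vector"
  shows "\<alpha> *\<^sub>R a + \<beta> *\<^sub>R b \<in> span {a, b}"
  by (simp add: span_add span_mul span_base)

lemma SG:
  fixes S :: "'a::euclidean_space set"
  assumes fS: "finite S" and S0: "0 \<notin> S" and nc: "\<And>a b. \<not> S \<subseteq> span {a, b}"
  shows "\<exists>a\<in>S. \<exists>b\<in>S. b \<notin> span {a} \<and> (\<forall>c\<in>S. c \<in> span {a,b} \<longrightarrow> c \<in> span {a} \<or> c \<in> span {b})"
proof -
  have "\<forall>x\<in>S. x \<notin> span {}" using S0 by auto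
  then obtain h :: "'a \<Rightarrow> real" where h: "linear h" "\<forall>x\<in>S. h x \<noteq> 0"
    using gen_functional[OF fS, of "{}"] by blast
  define q where "q = (\<lambda>c. (1 / h c) *\<^sub>R c)"
  have hq: "h (q c) = 1" if "c \<in> S" for c
    using h that by (simp add: q_def linear_scale)
  have qpar: "c \<in> span {a}" if "a \<in> S" "c \<in> S" "q c = q a" for a c
  proof -
    have "c = h c *\<^sub>R q c" using h that(2) by (simp add: q_def)
    also have "\<dots> = h c *\<^sub>R q a" using that(3) by simp
    also have "\<dots> = (h c / h a) *\<^sub>R a" by (simp add: q_def)
    finally have "c = (h c / h a) *\<^sub>R a" .
    moreover have "(h c / h a) *\<^sub>R a \<in> span {a}" by (simp add: span_base span_mul)
    ultimately show ?thesis by simp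
  qed
  have qspan: "onl (q a) (q b) (q c)" if abc: "a \<in> S" "b \<in> S" "c \<in> S" "c \<in> span {a, b}" for a b c
  proof -
    obtain \<alpha> \<beta> where c: "c = \<alpha> *\<^sub>R a + \<beta> *\<^sub>R b" using span2_E[OF abc(4)] by blast
    have hc: "h c = \<alpha> * h a + \<beta> * h b" using h(1) c by (simp add: linear_add linear_scale)
    have ne: "h a \<noteq> 0" "h b \<noteq> 0" "h c \<noteq> 0" using h abc by auto
    define t where "t = \<beta> * h b / h c"
    have "q a + t *\<^sub>R (q b - q a) = (1 - t) *\<^sub>R q a + t *\<^sub>R q b" by (simp add: algebra_simps)
    also have "1 - t = \<alpha> * h a / h c" using hc ne by (simp add: t_def field_simps)
    also have "(\<alpha> * h a / h c) *\<^sub>R q a + t *\<^sub>R q b = (1 / h c) *\<^sub>R (\<alpha> *\<^sub>R a + \<beta> *\<^sub>R b)"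
      using ne by (simp add: q_def t_def scaleR_add_right)
    also have "\<dots> = q c" by (simp add: q_def c)
    finally show ?thesis unfolding onl_def by (intro exI[of _ t]) simp
  qed
  have "S \<noteq> {}" using nc[of 0 0] by auto
  then obtain a0 where a0: "a0 \<in> S" by blast
  obtain b0 where b0: "b0 \<in> S" "b0 \<notin> span {a0}" using nc[of a0 a0] by auto
  obtain c0 where c0: "c0 \<in> S" "c0 \<notin> span {a0, b0}" using nc[of a0 b0] by auto
  have yz0: "q a0 \<noteq> q b0" using qpar[OF a0 b0(1)] b0(2) by metis
  have nx0: "\<not> onl (q a0) (q b0) (q c0)"
  proof
    assume "onl (q a0) (q b0) (q c0)"
    then obtain t where t: "q c0 = q a0 + t *\<^sub>R (q b0 - q a0)" by (auto simp: onl_def)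
    have "c0 = h c0 *\<^sub>R q c0" using h c0 by (simp add: q_def)
    also have "\<dots> = h c0 *\<^sub>R ((1 - t) *\<^sub>R q a0 + t *\<^sub>R q b0)"
      unfolding t by (simp add: algebra_simps)
    also have "\<dots> = (h c0 * (1 - t) / h a0) *\<^sub>R a0 + (h c0 * t / h b0) *\<^sub>R b0"
      by (simp add: q_def scaleR_add_right)
    finally have "c0 \<in> span {a0, b0}" using span2_I by metis
    then show False using c0 by simp
  qed
  obtain y z where yz: "y \<in> q ` S" "z \<in> q ` S" "y \<noteq> z" "\<forall>x\<in>q ` S. onl y z x \<longrightarrow> x = y \<or> x = z"
    using kelly[of "q ` S" "q c0" "q a0" "q b0"] fS a0 b0 c0 yz0 nx0 by blast
  obtain a b where ab: "a \<in> S" "b \<in> S" "y = q a" "z = q b" using yz by blast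
  have "b \<notin> span {a}"
  proof
    assume "b \<in> span {a}"
    then obtain k where k: "b = k *\<^sub>R a" by (auto simp: span_singleton)
    have hb: "h b = k * h a" using h(1) k by (simp add: linear_scale)
    then have "k \<noteq> 0" using h ab by auto
    then have "q b = q a" using hb h ab k by (simp add: q_def)
    then show False using yz ab by simp
  qed
  moreover have "c \<in> span {a} \<or> c \<in> span {b}" if "c \<in> S" "c \<in> span {a, b}" for c
  proof -
    have "q c = q a \<or> q c = q b" using yz(4) qspan[OF ab(1,2) that] ab that by blast
    then show ?thesis using qpar ab that by blast
  qed
  ultimately show ?thesis using ab by blast
qed


definition opp :: "'a::real_vector set \<Rightarrow> 'a \<Rightarrow> 'a \<Rightarrow> bool" where
  "opp B u v \<longleftrightarrow> (\<exists>c>0. u + c *\<^sub>R v \<in> span B)"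

definition NoOpp :: "('i \<Rightarrow> 'a::real_vector) \<Rightarrow> 'a set \<Rightarrow> 'i set \<Rightarrow> bool" where
  "NoOpp V B R \<longleftrightarrow> (\<forall>a\<in>R. \<forall>b\<in>R. a \<noteq> b \<longrightarrow> \<not> opp B (V a) (V b))"

definition SymR :: "('i \<Rightarrow> 'a::euclidean_space) \<Rightarrow> 'a set \<Rightarrow> 'i set \<Rightarrow> bool" where
  "SymR V B S \<longleftrightarrow> (\<forall>(h1::'a\<Rightarrow>real) (h2::'a\<Rightarrow>real). linear h1 \<longrightarrow> linear h2 \<longrightarrow> (\<forall>b\<in>B. h1 b = 0) \<longrightarrow> (\<forall>b\<in>B. h2 b = 0)
      \<longrightarrow> Dv V {j \<in> S. h1 (V j) = 0} h2 = 0)"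

lemma lin_span0:
  fixes h :: "'a::euclidean_space \<Rightarrow> real"
  assumes "linear h" "\<forall>b\<in>B. h b = 0" "x \<in> span B"
  shows "h x = 0"
  using assms real_vector.linear_eq_0_on_span by blast

lemma Dv_single:
  "Dv V {a} f = (if f (V a) > 0 then 1 else if f (V a) < 0 then -1 else 0)"
proof -
  have "{j \<in> {a}. f (V j) > 0} = (if f (V a) > 0 then {a} else {})" by auto
  moreover have "{j \<in> {a}. f (V j) < 0} = (if f (V a) < 0 then {a} else {})" by auto
  ultimately show ?thesis by (simp add: Dv_def pos_count_def neg_count_def)
qed

lemma Dv_pos_all:
  assumes "finite M" "\<And>j. j \<in> M \<Longrightarrow> f (V j) > 0"
  shows "Dv V M f = int (card M)"
proof -
  have e1: "{j \<in> M. f (V j) > 0} = M" using assms by auto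
  have e2: "{j \<in> M. f (V j) < 0} = {}" using assms by fastforce
  show ?thesis unfolding Dv_def pos_count_def neg_count_def by (simp only: e1 e2 card.empty)
qed

lemma Dv_neg_all:
  assumes "finite M" "\<And>j. j \<in> M \<Longrightarrow> f (V j) < 0"
  shows "Dv V M f = - int (card M)"
proof -
  have e1: "{j \<in> M. f (V j) < 0} = M" using assms by auto
  have e2: "{j \<in> M. f (V j) > 0} = {}" using assms by fastforce
  show ?thesis unfolding Dv_def pos_count_def neg_count_def by (simp only: e1 e2 card.empty)
qed

lemma SymR_empty: "SymR V B {}"
  by (simp add: SymR_def)

lemma resid:
  fixes V :: "'i \<Rightarrow> 'a::euclidean_space"
  assumes "finite S"
  shows "\<exists>R\<subseteq>S. NoOpp V B R \<and> SymR V B (S - R)"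
  using assms
proof (induction "card S" arbitrary: S rule: less_induct)
  case less
  show ?case
  proof (cases "NoOpp V B S")
    case True
    then show ?thesis using SymR_empty[of V B] by (intro exI[of _ S]) auto
  next
    case False
    then obtain a b c where ab: "a \<in> S" "b \<in> S" "a \<noteq> b" "c > 0" "V a + c *\<^sub>R V b \<in> span B"
      by (auto simp: NoOpp_def opp_def)
    define S' where "S' = S - {a, b}"
    have "card S' < card S" using ab less.prems unfolding S'_def
      by (intro psubset_card_mono) auto
    then obtain R where R: "R \<subseteq> S'" "NoOpp V B R" "SymR V B (S' - R)"
      using less.hyps[of S'] less.prems by (auto simp: S'_def)
    have "SymR V B (S - R)"
      unfolding SymR_def
    proof (intro allI impI)
      fix h1 h2 :: "'a \<Rightarrow> real"
      assume h: "linear h1" "linear h2" "\<forall>b\<in>B. h1 b = 0" "\<forall>b\<in>B. h2 b = 0"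
      have e: "{j \<in> S - R. h1 (V j) = 0} = {j \<in> S' - R. h1 (V j) = 0} \<union> {j \<in> {a, b}. h1 (V j) = 0}"
        using R ab by (auto simp: S'_def)
      have "Dv V {j \<in> S - R. h1 (V j) = 0} h2 = Dv V {j \<in> S' - R. h1 (V j) = 0} h2 + Dv V {j \<in> {a, b}. h1 (V j) = 0} h2"
        unfolding e using less.prems by (intro Dv_union) (auto simp: S'_def)
      also have "Dv V {j \<in> S' - R. h1 (V j) = 0} h2 = 0" using R(3) h by (simp add: SymR_def)
      also have "Dv V {j \<in> {a, b}. h1 (V j) = 0} h2 = 0"
      proof -
        have z1: "h1 (V a + c *\<^sub>R V b) = 0" using lin_span0[OF h(1) h(3) ab(5)] .
        have z2: "h2 (V a + c *\<^sub>R V b) = 0" using lin_span0[OF h(2) h(4) ab(5)] .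
        have e1: "h1 (V a) = - c * h1 (V b)" using z1 h(1) by (simp add: linear_add linear_scale eq_neg_iff_add_eq_0)
        have e2: "h2 (V a) = - c * h2 (V b)" using z2 h(2) by (simp add: linear_add linear_scale eq_neg_iff_add_eq_0)
        show ?thesis
        proof (cases "h1 (V b) = 0")
          case True
          then have ee: "{j \<in> {a, b}. h1 (V j) = 0} = {a} \<union> {b}" using e1 by auto
          have "Dv V {j \<in> {a, b}. h1 (V j) = 0} h2 = Dv V ({a} \<union> {b}) h2" by (simp only: ee)
          also have "\<dots> = Dv V {a} h2 + Dv V {b} h2" using ab by (intro Dv_union) auto
          also have "\<dots> = 0" using e2 ab(4) by (simp add: Dv_single mult_pos_neg mult_pos_pos zero_less_mult_iff mult_less_0_iff)
          finally show ?thesis .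
        next
          case False
          then have ee: "{j \<in> {a, b}. h1 (V j) = 0} = {}" using e1 ab(4) by auto
          show ?thesis by (simp only: ee Dv_empty)
        qed
      qed
      finally show "Dv V {j \<in> S - R. h1 (V j) = 0} h2 = 0" by simp
    qed
    then show ?thesis using R by (intro exI[of _ R]) (auto simp: S'_def)
  qed
qed

lemma key_good:
  fixes V :: "'i \<Rightarrow> 'a::euclidean_space"
  assumes fJ: "finite J" and BJ: "B \<subseteq> V ` J" and indB: "independent B"
    and RJ: "R \<subseteq> {j\<in>J. V j \<notin> span B}" and symR: "SymR V B ({j\<in>J. V j \<notin> span B} - R)"
    and aJ: "a \<in> J" and bR: "b \<in> R"
    and a_nB: "V a \<notin> span B" and b_nB: "V b \<notin> span (insert (V a) B)"
    and KP: "\<And>x. x \<in> R \<Longrightarrow> V x \<in> span (insert (V a) (insert (V b) B)) \<Longrightarrow>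
               V x \<in> span (insert (V a) B) \<or> (\<exists>\<beta>>0. V x - \<beta> *\<^sub>R V b \<in> span B)"
  shows "\<exists>(h1::'a\<Rightarrow>real) (h2::'a\<Rightarrow>real). linear h1 \<and> linear h2 \<and> card B + 1 \<le> dim (V ` {j\<in>J. h1 (V j) = 0 \<and> h2 (V j) = 0})
           \<and> Dv V {j\<in>J. h1 (V j) = 0} h2 \<noteq> 0"
proof -
  define B1 where "B1 = insert (V a) (insert (V b) B)"
  define B2 where "B2 = insert (V a) B"
  have fB: "finite B" using indB by (rule finiteI_independent)
  have "finite (V ` {j\<in>J. V j \<notin> span B1})" "\<forall>x\<in>V ` {j\<in>J. V j \<notin> span B1}. x \<notin> span B1"
    using fJ by auto
  from gen_functional[OF this] obtain h1 :: "'a \<Rightarrow> real" where h1: "linear h1" "\<forall>x\<in>span B1. h1 x = 0"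
      "\<forall>x\<in>V ` {j\<in>J. V j \<notin> span B1}. h1 x \<noteq> 0"
    by blast
  have "finite (V ` {j\<in>J. V j \<notin> span B2})" "\<forall>x\<in>V ` {j\<in>J. V j \<notin> span B2}. x \<notin> span B2"
    using fJ by auto
  from gen_functional[OF this] obtain h2 :: "'a \<Rightarrow> real" where h2: "linear h2" "\<forall>x\<in>span B2. h2 x = 0"
      "\<forall>x\<in>V ` {j\<in>J. V j \<notin> span B2}. h2 x \<noteq> 0"
    by blast
  have Z1: "h1 (V j) = 0 \<longleftrightarrow> V j \<in> span B1" if "j \<in> J" for j using h1 that by blast
  have Z2: "h2 (V j) = 0 \<longleftrightarrow> V j \<in> span B2" if "j \<in> J" for j using h2 that by blast
  have sB2: "span B2 \<subseteq> span B1" unfolding B1_def B2_def by (intro span_mono) auto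
  have sB: "span B \<subseteq> span B2" unfolding B2_def by (intro span_mono) auto
  have h1B: "\<forall>x\<in>B. h1 x = 0" using h1(2) sB sB2 span_base by blast
  have h2B: "\<forall>x\<in>B. h2 x = 0" using h2(2) sB span_base by blast
  have sub: "insert (V a) B \<subseteq> V ` {j\<in>J. h1 (V j) = 0 \<and> h2 (V j) = 0}"
  proof
    fix v assume "v \<in> insert (V a) B"
    then show "v \<in> V ` {j\<in>J. h1 (V j) = 0 \<and> h2 (V j) = 0}"
    proof
      assume "v = V a"
      moreover have "V a \<in> span B2" by (simp add: B2_def span_base)
      ultimately show ?thesis using aJ Z1 Z2 sB2 by blast
    next
      assume vB: "v \<in> B"
      then obtain j where j: "j \<in> J" "v = V j" using BJ by blast
      have "V j \<in> span B2" using vB j sB span_base by blast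
      then show ?thesis using j Z1 Z2 sB2 by blast
    qed
  qed
  have ind: "independent (insert (V a) B)" using a_nB indB by (rule independent_insertI)
  have "V a \<notin> B" using a_nB span_base by blast
  then have "card (insert (V a) B) = card B + 1" using fB by simp
  then have rank: "card B + 1 \<le> dim (V ` {j\<in>J. h1 (V j) = 0 \<and> h2 (V j) = 0})"
    using independent_card_le_dim[OF sub ind] by simp
  define K where "K = {j\<in>J. h1 (V j) = 0}"
  have fK: "finite K" using fJ by (simp add: K_def)
  have "Dv V K h2 = Dv V {j\<in>K. V j \<in> span B} h2 + Dv V {j\<in>K. V j \<notin> span B} h2"
    using Dv_split[OF fK] .
  also have "Dv V {j\<in>K. V j \<in> span B} h2 = 0"
    by (rule Dv_zero_part) (use h2(2) sB in blast)
  also have "Dv V {j\<in>K. V j \<notin> span B} h2 =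
      Dv V {j\<in>{j\<in>K. V j \<notin> span B}. j \<in> R} h2 + Dv V {j\<in>{j\<in>K. V j \<notin> span B}. j \<notin> R} h2"
    using Dv_split[of "{j\<in>K. V j \<notin> span B}"] fK by simp
  also have "Dv V {j\<in>{j\<in>K. V j \<notin> span B}. j \<notin> R} h2 = 0"
  proof -
    have "{j\<in>{j\<in>K. V j \<notin> span B}. j \<notin> R} = {j \<in> {j\<in>J. V j \<notin> span B} - R. h1 (V j) = 0}"
      by (auto simp: K_def)
    then show ?thesis using symR h1(1) h2(1) h1B h2B unfolding SymR_def by simp
  qed
  also have "{j\<in>{j\<in>K. V j \<notin> span B}. j \<in> R} = {j \<in> R. V j \<in> span B1}"
    using RJ Z1 by (auto simp: K_def)
  finally have DK: "Dv V K h2 = Dv V {j \<in> R. V j \<in> span B1} h2" by simp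
  define M where "M = {j \<in> {j \<in> R. V j \<in> span B1}. h2 (V j) \<noteq> 0}"
  have "R \<subseteq> J" using RJ by auto
  then have fR: "finite R" using fJ finite_subset by blast
  have fM: "finite M" using fR by (simp add: M_def)
  have DM: "Dv V {j \<in> R. V j \<in> span B1} h2 = Dv V M h2"
    unfolding M_def using fR by (intro Dv_nonzero) simp
  have hb: "h2 (V b) \<noteq> 0" using Z2 b_nB bR RJ unfolding B2_def by blast
  have bM: "b \<in> M" using bR hb by (simp add: M_def B1_def span_base)
  have sgnM: "\<exists>\<beta>>0. h2 (V j) = \<beta> * h2 (V b)" if "j \<in> M" for j
  proof -
    have jR: "j \<in> R" "V j \<in> span B1" "h2 (V j) \<noteq> 0" using that by (auto simp: M_def)
    have "V j \<notin> span B2" using jR(3) h2(2) by blast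
    then obtain \<beta> where \<beta>: "\<beta> > 0" "V j - \<beta> *\<^sub>R V b \<in> span B"
      using KP[OF jR(1)] jR(2) unfolding B1_def B2_def by blast
    have "h2 (V j - \<beta> *\<^sub>R V b) = 0" using \<beta>(2) h2(2) sB by blast
    then have "h2 (V j) = \<beta> * h2 (V b)" using h2(1) by (simp add: linear_diff linear_scale)
    then show ?thesis using \<beta> by blast
  qed
  have "Dv V M h2 \<noteq> 0"
  proof (cases "h2 (V b) > 0")
    case True
    have pos: "h2 (V j) > 0" if jM: "j \<in> M" for j
    proof -
      obtain \<beta> where "\<beta> > 0" "h2 (V j) = \<beta> * h2 (V b)" using sgnM[OF jM] by blast
      then show ?thesis using True by simp
    qed
    have "Dv V M h2 = int (card M)" using Dv_pos_all[of M h2 V] fM pos by blast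
    then show ?thesis using bM fM card_gt_0_iff by fastforce
  next
    case False
    then have neg: "h2 (V b) < 0" using hb by simp
    have negs: "h2 (V j) < 0" if jM: "j \<in> M" for j
    proof -
      obtain \<beta> where "\<beta> > 0" "h2 (V j) = \<beta> * h2 (V b)" using sgnM[OF jM] by blast
      then show ?thesis using neg by (simp add: mult_pos_neg)
    qed
    have "Dv V M h2 = - int (card M)" using Dv_neg_all[of M h2 V] fM negs by blast
    then show ?thesis using bM fM card_gt_0_iff by fastforce
  qed
  then have "Dv V {j\<in>J. h1 (V j) = 0} h2 \<noteq> 0" using DK DM by (simp add: K_def)
  then show ?thesis using h1(1) h2(1) rank by (intro exI[of _ h1] exI[of _ h2]) blast
qed


lemma beta_pos:
  fixes V :: "'i \<Rightarrow> 'a::euclidean_space"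
  assumes no: "NoOpp V B R" and xy: "x \<in> R" "y \<in> R" and nB: "V x \<notin> span B" "V y \<notin> span B"
    and d: "V x - \<beta> *\<^sub>R V y \<in> span B"
  shows "\<beta> > 0"
proof (rule ccontr)
  assume "\<not> \<beta> > 0"
  then consider "\<beta> = 0" | "\<beta> < 0" by linarith
  then show False
  proof cases
    case 1 then show False using d nB by simp
  next
    case 2
    show False
    proof (cases "x = y")
      case True
      then have "(1 - \<beta>) *\<^sub>R V y \<in> span B" using d by (simp add: algebra_simps)
      then have "(1 / (1 - \<beta>)) *\<^sub>R ((1 - \<beta>) *\<^sub>R V y) \<in> span B" by (rule span_mul)
      then have "V y \<in> span B" using 2 by simp
      then show False using nB by simp
    next
      case False
      have "V x + (- \<beta>) *\<^sub>R V y \<in> span B" using d by simp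
      moreover have "- \<beta> > 0" using 2 by simp
      ultimately have "opp B (V x) (V y)" unfolding opp_def by blast
      then show False using no xy False by (auto simp: NoOpp_def)
    qed
  qed
qed

lemma span_sub_imp:
  fixes A C :: "'a::real_vector set"
  shows "A \<subseteq> span C \<Longrightarrow> span A \<subseteq> span C"
  by (simp add: span_minimal)

lemma RG3:
  fixes V :: "'i \<Rightarrow> 'a::euclidean_space"
  assumes fJ: "finite J" and BJ: "B \<subseteq> V ` J" and indB: "independent B"
    and rk: "dim (V ` J) = card B + 3"
    and h: "linear h" "\<forall>b\<in>B. h b = 0" "Dv V J h \<noteq> 0"
  shows "\<exists>(h1::'a\<Rightarrow>real) (h2::'a\<Rightarrow>real). linear h1 \<and> linear h2 \<and>
           card B + 1 \<le> dim (V ` {j\<in>J. h1 (V j) = 0 \<and> h2 (V j) = 0}) \<and> Dv V {j\<in>J. h1 (V j) = 0} h2 \<noteq> 0"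
proof -
  define J' where "J' = {j\<in>J. V j \<notin> span B}"
  have fJ': "finite J'" using fJ by (simp add: J'_def)
  obtain R where R: "R \<subseteq> J'" "NoOpp V B R" "SymR V B (J' - R)" using resid[OF fJ', of V B] by blast
  have fR: "finite R" using R(1) fJ' finite_subset by blast
  have RJ: "R \<subseteq> {j\<in>J. V j \<notin> span B}" using R(1) by (simp add: J'_def)
  have RJ2: "\<And>x. x \<in> R \<Longrightarrow> x \<in> J \<and> V x \<notin> span B" using RJ by blast
  have fB: "finite B" using indB by (rule finiteI_independent)
  have "R \<noteq> {}"
  proof
    assume R0: "R = {}"
    have "Dv V J h = Dv V {j\<in>J. V j \<in> span B} h + Dv V {j\<in>J. \<not> V j \<in> span B} h"
      using Dv_split[OF fJ] .
    also have "Dv V {j\<in>J. V j \<in> span B} h = 0"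
      by (rule Dv_zero_part) (use h lin_span0 in blast)
    also have "{j\<in>J. \<not> V j \<in> span B} = J' - R" using R0 by (auto simp: J'_def)
    also have "Dv V (J' - R) h = 0"
    proof -
      have s0: "linear (\<lambda>x::'a. 0::real)" by (simp add: linear_zero)
      have "Dv V {j \<in> J' - R. (\<lambda>x. 0::real) (V j) = 0} h = 0"
        using R(3) s0 h(1) h(2) unfolding SymR_def by blast
      moreover have "{j \<in> J' - R. (\<lambda>x. 0::real) (V j) = 0} = J' - R" by auto
      ultimately show ?thesis by simp
    qed
    finally show False using h(3) by simp
  qed
  then obtain y where yR: "y \<in> R" by blast
  show ?thesis
  proof (cases "\<exists>u\<in>J. V u \<notin> span (B \<union> V ` R)")
    case True
    then obtain u where u: "u \<in> J" "V u \<notin> span (B \<union> V ` R)" by blast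
    have sBR: "span B \<subseteq> span (B \<union> V ` R)" by (intro span_mono) auto
    have yBR: "V y \<in> span (B \<union> V ` R)" using yR by (simp add: span_base)
    have uB: "V u \<notin> span B" using u sBR by blast
    have nu: "V u \<in> span (B \<union> V ` R)" if "w \<in> span (B \<union> V ` R)" "w - k *\<^sub>R V u \<in> span (B \<union> V ` R)" "k \<noteq> 0" for w k
    proof -
      have "k *\<^sub>R V u \<in> span (B \<union> V ` R)" using span_diff[OF that(1) that(2)] by simp
      then have "(1 / k) *\<^sub>R (k *\<^sub>R V u) \<in> span (B \<union> V ` R)" by (rule span_mul)
      then show ?thesis using that(3) by simp
    qed
    have yB: "V y \<notin> span (insert (V u) B)"
    proof
      assume "V y \<in> span (insert (V u) B)"
      then obtain k where k: "V y - k *\<^sub>R V u \<in> span B" using span_breakdown_eq by blast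
      show False
      proof (cases "k = 0")
        case True then show False using k RJ2[OF yR] by simp
      next
        case False then show False using nu[OF yBR _ False] k sBR u by blast
      qed
    qed
    have KP: "V x \<in> span (insert (V u) B) \<or> (\<exists>\<beta>>0. V x - \<beta> *\<^sub>R V y \<in> span B)"
      if xR: "x \<in> R" and xs: "V x \<in> span (insert (V u) (insert (V y) B))" for x
    proof -
      obtain k where k: "V x - k *\<^sub>R V u \<in> span (insert (V y) B)" using xs span_breakdown_eq by blast
      have sy: "span (insert (V y) B) \<subseteq> span (B \<union> V ` R)" using yR by (intro span_mono) auto
      have xBR: "V x \<in> span (B \<union> V ` R)" using xR by (simp add: span_base)
      have "k = 0"
      proof (rule ccontr)
        assume "k \<noteq> 0"
        then show False using nu[OF xBR _ \<open>k \<noteq> 0\<close>] k sy u by blast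
      qed
      then have "V x \<in> span (insert (V y) B)" using k by simp
      then obtain \<beta> where \<beta>: "V x - \<beta> *\<^sub>R V y \<in> span B" using span_breakdown_eq by blast
      have "\<beta> > 0" using beta_pos[OF R(2) xR yR _ _ \<beta>] RJ2[OF xR] RJ2[OF yR] by blast
      then show ?thesis using \<beta> by blast
    qed
    show ?thesis
      using key_good[OF fJ BJ indB RJ _ u(1) yR uB yB KP] R(3) by (simp add: J'_def)
  next
    case False
    then have allJ: "\<forall>u\<in>J. V u \<in> span (B \<union> V ` R)" by blast
    obtain p :: "'a \<Rightarrow> 'a" where p: "linear p" "\<And>x. x - p x \<in> span B" "\<And>x. p x = 0 \<longleftrightarrow> x \<in> span B"
      using proj_exists by blast
    have pd: "p (x - k *\<^sub>R z) = p x - k *\<^sub>R p z" for x z k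
      using p(1) by (simp add: linear_diff linear_scale)
    define S where "S = p ` V ` R"
    have fS: "finite S" using fR by (simp add: S_def)
    have S0: "0 \<notin> S" using RJ2 p(3) by (auto simp: S_def)
    have nc: "\<not> S \<subseteq> span {c, d}" for c d
    proof
      assume Scd: "S \<subseteq> span {c, d}"
      have sub1: "B \<union> V ` R \<subseteq> span (B \<union> {c, d})"
      proof
        fix v assume "v \<in> B \<union> V ` R"
        then show "v \<in> span (B \<union> {c, d})"
        proof
          assume "v \<in> B" then show ?thesis by (simp add: span_base)
        next
          assume "v \<in> V ` R"
          then obtain x where x: "x \<in> R" "v = V x" by blast
          have "p v \<in> span {c, d}" using Scd x by (auto simp: S_def)
          then have "p v \<in> span (B \<union> {c, d})" using span_mono[of "{c, d}" "B \<union> {c, d}"] by blast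
          moreover have "v - p v \<in> span (B \<union> {c, d})" using p(2)[of v] span_mono[of B "B \<union> {c, d}"] by blast
          ultimately show ?thesis using span_add by fastforce
        qed
      qed
      have "V ` J \<subseteq> span (B \<union> {c, d})" using allJ span_sub_imp[OF sub1] by blast
      then have "dim (V ` J) \<le> card (B \<union> {c, d})" using fB by (intro dim_le_card) auto
      also have "\<dots> \<le> card B + card {c, d}" by (rule card_Un_le)
      also have "\<dots> \<le> card B + 2" by (simp add: card_insert_le_m1)
      finally show False using rk by simp
    qed
    obtain a' b' where ab': "a' \<in> S" "b' \<in> S" "b' \<notin> span {a'}"
        "\<forall>c\<in>S. c \<in> span {a', b'} \<longrightarrow> c \<in> span {a'} \<or> c \<in> span {b'}"
      using SG[OF fS S0 nc] by blast
    obtain a b where ab: "a \<in> R" "b \<in> R" "a' = p (V a)" "b' = p (V b)" using ab' by (auto simp: S_def)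
    have aB: "V a \<notin> span B" using RJ2[OF ab(1)] by simp
    have bB: "V b \<notin> span (insert (V a) B)"
    proof
      assume "V b \<in> span (insert (V a) B)"
      then obtain k where "V b - k *\<^sub>R V a \<in> span B" using span_breakdown_eq by blast
      then have "p (V b - k *\<^sub>R V a) = 0" using p(3) by blast
      then have "b' = k *\<^sub>R a'" using ab pd by simp
      then have "b' \<in> span {a'}" by (simp add: span_mul span_base)
      then show False using ab' by simp
    qed
    have KP: "V x \<in> span (insert (V a) B) \<or> (\<exists>\<beta>>0. V x - \<beta> *\<^sub>R V b \<in> span B)"
      if xR: "x \<in> R" and xs: "V x \<in> span (insert (V a) (insert (V b) B))" for x
    proof -
      obtain k where k: "V x - k *\<^sub>R V a \<in> span (insert (V b) B)" using xs span_breakdown_eq by blast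
      then obtain l where l: "V x - k *\<^sub>R V a - l *\<^sub>R V b \<in> span B" using span_breakdown_eq by blast
      then have "p (V x - k *\<^sub>R V a - l *\<^sub>R V b) = 0" using p(3) by blast
      moreover have "p (V x - k *\<^sub>R V a - l *\<^sub>R V b) = p (V x) - k *\<^sub>R p (V a) - l *\<^sub>R p (V b)"
        using p(1) by (simp add: linear_diff linear_scale)
      ultimately have px: "p (V x) = k *\<^sub>R a' + l *\<^sub>R b'" using ab by (simp add: algebra_simps)
      have "p (V x) \<in> S" using xR by (simp add: S_def)
      moreover have "p (V x) \<in> span {a', b'}" unfolding px by (rule span2_I)
      ultimately have "p (V x) \<in> span {a'} \<or> p (V x) \<in> span {b'}" using ab'(4) by blast
      then show ?thesis
      proof
        assume "p (V x) \<in> span {a'}"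
        then obtain m where "p (V x) = m *\<^sub>R a'" by (auto simp: span_singleton)
        then have "p (V x - m *\<^sub>R V a) = 0" using ab pd by simp
        then have "V x - m *\<^sub>R V a \<in> span B" using p(3) by blast
        then have "V x \<in> span (insert (V a) B)" using span_breakdown_eq by blast
        then show ?thesis by blast
      next
        assume "p (V x) \<in> span {b'}"
        then obtain m where "p (V x) = m *\<^sub>R b'" by (auto simp: span_singleton)
        then have "p (V x - m *\<^sub>R V b) = 0" using ab pd by simp
        then have mB: "V x - m *\<^sub>R V b \<in> span B" using p(3) by blast
        have "m > 0" using beta_pos[OF R(2) xR ab(2) _ _ mB] RJ2[OF xR] RJ2[OF ab(2)] by blast
        then show ?thesis using mB by blast
      qed
    qed
    show ?thesis
      using key_good[OF fJ BJ indB RJ _ _ ab(2) aB bB KP] RJ2[OF ab(1)] R(3) by (simp add: J'_def)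
  qed
qed


definition PC :: "('i \<Rightarrow> 'a::euclidean_space) \<Rightarrow> 'i set \<Rightarrow> bool" where
  "PC V J \<longleftrightarrow> (\<forall>j\<in>J. V j \<noteq> 0) \<and> NoOpp V {} J"

lemma PC_subset: "PC V J \<Longrightarrow> K \<subseteq> J \<Longrightarrow> PC V K"
  by (auto simp: PC_def NoOpp_def)

lemma line_pos:
  fixes V :: "'i \<Rightarrow> 'a::euclidean_space"
  assumes pc: "PC V J" and u: "u \<in> J" and j: "j \<in> J" and js: "V j \<in> span {V u}"
  shows "V u \<bullet> V j > 0"
proof -
  obtain k where k: "V j = k *\<^sub>R V u" using js by (auto simp: span_singleton)
  have u0: "V u \<noteq> 0" and j0: "V j \<noteq> 0" using pc u j by (auto simp: PC_def)
  have "k \<noteq> 0" using k j0 by auto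
  have "k > 0"
  proof (rule ccontr)
    assume "\<not> k > 0"
    then have kn: "k < 0" using \<open>k \<noteq> 0\<close> by simp
    show False
    proof (cases "j = u")
      case True
      then have "(1 - k) *\<^sub>R V u = 0" using k by (simp add: algebra_simps)
      then show False using kn u0 by simp
    next
      case False
      have "V j + (- k) *\<^sub>R V u \<in> span {}" using k by simp
      then have "opp {} (V j) (V u)" using kn unfolding opp_def by (intro exI[of _ "-k"]) auto
      then show False using pc u j False by (auto simp: PC_def NoOpp_def)
    qed
  qed
  then show ?thesis using k u0 by simp
qed

lemma Qbase:
  fixes V :: "'i \<Rightarrow> 'a::euclidean_space"
  assumes fJ: "finite J" and pc: "PC V J" and uJ: "u \<in> J"
  shows "\<exists>(h1::'a\<Rightarrow>real) (h2::'a\<Rightarrow>real). linear h1 \<and> linear h2 \<and> Dv V {j\<in>J. h1 (V j) = 0} h2 \<noteq> 0"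
proof -
  have "finite (V ` {j\<in>J. V j \<notin> span {V u}})" "\<forall>x\<in>V ` {j\<in>J. V j \<notin> span {V u}}. x \<notin> span {V u}"
    using fJ by auto
  from gen_functional[OF this] obtain h1 :: "'a \<Rightarrow> real" where h1: "linear h1" "\<forall>x\<in>span {V u}. h1 x = 0"
      "\<forall>x\<in>V ` {j\<in>J. V j \<notin> span {V u}}. h1 x \<noteq> 0" by blast
  define K where "K = {j\<in>J. h1 (V j) = 0}"
  have fK: "finite K" using fJ by (simp add: K_def)
  have pos: "V u \<bullet> V j > 0" if "j \<in> K" for j
  proof -
    have "j \<in> J" "V j \<in> span {V u}" using that h1 by (auto simp: K_def)
    then show ?thesis using line_pos[OF pc uJ] by blast
  qed
  have "Dv V K (\<lambda>x. V u \<bullet> x) = int (card K)"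
    using Dv_pos_all[of K "\<lambda>x. V u \<bullet> x" V] fK pos by blast
  moreover have "u \<in> K" using uJ h1 by (simp add: K_def span_base)
  ultimately have "Dv V K (\<lambda>x. V u \<bullet> x) \<noteq> 0" using fK card_gt_0_iff by fastforce
  then show ?thesis using h1(1) lin_inner unfolding K_def by blast
qed

lemma Qk:
  fixes V :: "'i \<Rightarrow> 'a::euclidean_space"
  assumes "2 \<le> k"
  shows "finite J \<Longrightarrow> PC V J \<Longrightarrow> dim (V ` J) = k \<Longrightarrow>
    \<exists>(h1::'a\<Rightarrow>real) (h2::'a\<Rightarrow>real). linear h1 \<and> linear h2 \<and> k - 2 \<le> dim (V ` {j\<in>J. h1 (V j) = 0 \<and> h2 (V j) = 0})
       \<and> Dv V {j\<in>J. h1 (V j) = 0} h2 \<noteq> 0"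
  using assms
proof (induction k arbitrary: J rule: nat_induct_at_least)
  case base
  then have "J \<noteq> {}" by auto
  then obtain u where "u \<in> J" by blast
  then show ?case using Qbase[OF base(1,2)] by auto
next
  case (Suc k)
  note fJ = Suc.prems(1) and pc = Suc.prems(2) and dJ = Suc.prems(3)
  obtain C where C: "C \<subseteq> V ` J" "independent C" "V ` J \<subseteq> span C" "card C = dim (V ` J)"
    using basis_exists by blast
  have "C \<noteq> {}" using C(4) dJ by auto
  then obtain c where c: "c \<in> C" by blast
  define B0 where "B0 = C - {c}"
  have fC: "finite C" using C(2) by (rule finiteI_independent)
  have cB0: "card B0 = k" using C(4) dJ c fC by (simp add: B0_def)
  have iB0: "independent B0" using C(2) by (simp add: B0_def independent_mono)
  have "finite (V ` {j\<in>J. V j \<notin> span B0})" "\<forall>x\<in>V ` {j\<in>J. V j \<notin> span B0}. x \<notin> span B0"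
    using fJ by auto
  from gen_functional[OF this] obtain h0 :: "'a \<Rightarrow> real" where h0: "linear h0" "\<forall>x\<in>span B0. h0 x = 0"
      "\<forall>x\<in>V ` {j\<in>J. V j \<notin> span B0}. h0 x \<noteq> 0" by blast
  define J0 where "J0 = {j\<in>J. h0 (V j) = 0}"
  have J0eq: "J0 = {j\<in>J. V j \<in> span B0}" using h0 by (auto simp: J0_def)
  have fJ0: "finite J0" using fJ by (simp add: J0_def)
  have pc0: "PC V J0" using pc by (rule PC_subset) (auto simp: J0_def)
  have "B0 \<subseteq> V ` J0"
  proof
    fix v assume v: "v \<in> B0"
    then have "v \<in> V ` J" using C(1) by (auto simp: B0_def)
    then obtain j where "j \<in> J" "v = V j" by blast
    then show "v \<in> V ` J0" using v by (auto simp: J0eq span_base)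
  qed
  then have d1: "k \<le> dim (V ` J0)" using independent_card_le_dim[OF _ iB0] cB0 by simp
  have "V ` J0 \<subseteq> span B0" by (auto simp: J0eq)
  then have "dim (V ` J0) \<le> dim B0" by (rule dim_mono)
  then have d2: "dim (V ` J0) \<le> k" using iB0 cB0 by (simp add: dim_eq_card_independent)
  have dJ0: "dim (V ` J0) = k" using d1 d2 by simp
  obtain h1' h2' :: "'a \<Rightarrow> real" where IH: "linear h1'" "linear h2'"
      "k - 2 \<le> dim (V ` {j\<in>J0. h1' (V j) = 0 \<and> h2' (V j) = 0})" "Dv V {j\<in>J0. h1' (V j) = 0} h2' \<noteq> 0"
    using Suc.IH[OF fJ0 pc0 dJ0] by blast
  define K where "K = {j\<in>J0. h1' (V j) = 0 \<and> h2' (V j) = 0}"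
  obtain D where D: "D \<subseteq> V ` K" "independent D" "V ` K \<subseteq> span D" "card D = dim (V ` K)"
    using basis_exists by blast
  obtain B where B: "B \<subseteq> D" "card B = k - 2" "finite B"
    using obtain_subset_with_card_n[of "k - 2" D] D(4) IH(3) by (auto simp: K_def)
  have iB: "independent B" using D(2) B(1) by (rule independent_mono)
  have BK: "B \<subseteq> V ` K" using B(1) D(1) by blast
  have BJ: "B \<subseteq> V ` J" using BK by (auto simp: K_def J0_def)
  have vanB: "h0 b = 0 \<and> h1' b = 0 \<and> h2' b = 0" if "b \<in> B" for b
    using BK that by (auto simp: K_def J0_def)
  define g where "g = Dv V {j\<in>J0. h1' (V j) = 0} h2'"
  obtain e2 where e2: "e2 > 0" "Dv V J0 (\<lambda>x. h1' x + e2 * h2' x) = Dv V J0 h1' + g"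
    using LEX[OF fJ0, of V h1' h2'] unfolding g_def by blast
  obtain e1 where e1: "e1 > 0" "Dv V J (\<lambda>x. h0 x + e1 * (h1' x + e2 * h2' x)) = Dv V J h0 + Dv V J0 (\<lambda>x. h1' x + e2 * h2' x)"
    using LEX[OF fJ, of V h0 "\<lambda>x. h1' x + e2 * h2' x"] unfolding J0_def by blast
  obtain e2' where e2': "e2' > 0" "Dv V J0 (\<lambda>x. - h1' x + e2' * h2' x) = Dv V J0 (\<lambda>x. - h1' x) + Dv V {j\<in>J0. - h1' (V j) = 0} h2'"
    using LEX[OF fJ0, of V "\<lambda>x. - h1' x" h2'] by blast
  have eqs1: "{j\<in>J0. - h1' (V j) = 0} = {j\<in>J0. h1' (V j) = 0}" by simp
  obtain e1' where e1': "e1' > 0" "Dv V J (\<lambda>x. - h0 x + e1' * (- h1' x + e2' * h2' x)) = Dv V J (\<lambda>x. - h0 x) + Dv V {j\<in>J. - h0 (V j) = 0} (\<lambda>x. - h1' x + e2' * h2' x)"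
    using LEX[OF fJ, of V "\<lambda>x. - h0 x" "\<lambda>x. - h1' x + e2' * h2' x"] by blast
  have eqs2: "{j\<in>J. - h0 (V j) = 0} = J0" by (simp add: J0_def)
  define f1 where "f1 = (\<lambda>x. h0 x + e1 * (h1' x + e2 * h2' x))"
  define f2 where "f2 = (\<lambda>x. - h0 x + e1' * (- h1' x + e2' * h2' x))"
  have "Dv V J f1 + Dv V J f2 = 2 * g"
    using e1(2) e2(2) e1'(2) e2'(2) eqs1 eqs2 by (simp add: f1_def f2_def Dv_neg g_def)
  then have "Dv V J f1 \<noteq> 0 \<or> Dv V J f2 \<noteq> 0" using IH(4) by (auto simp: g_def)
  moreover have "linear f1" unfolding f1_def using h0(1) IH(1,2)
    by (intro lin_add lin_cmul) auto
  moreover have "linear f2" unfolding f2_def using h0(1) IH(1,2)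
    by (intro lin_add lin_cmul lin_neg) auto
  moreover have "\<forall>b\<in>B. f1 b = 0" "\<forall>b\<in>B. f2 b = 0" using vanB by (auto simp: f1_def f2_def)
  ultimately obtain f :: "'a \<Rightarrow> real" where f: "linear f" "\<forall>b\<in>B. f b = 0" "Dv V J f \<noteq> 0" by blast
  have rk: "dim (V ` J) = card B + 3" using dJ B(2) Suc.hyps by simp
  obtain h1 h2 :: "'a \<Rightarrow> real" where hh: "linear h1" "linear h2"
      "card B + 1 \<le> dim (V ` {j\<in>J. h1 (V j) = 0 \<and> h2 (V j) = 0})" "Dv V {j\<in>J. h1 (V j) = 0} h2 \<noteq> 0"
    using RG3[OF fJ BJ iB rk f] by blast
  have "Suc k - 2 \<le> card B + 1" using B(2) Suc.hyps by simp
  then show ?case using hh by (intro exI[of _ h1] exI[of _ h2]) auto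
qed

lemma dim_one_line:
  fixes V :: "'i \<Rightarrow> 'a::euclidean_space"
  assumes d: "dim (V ` J) = 1" and u: "u \<in> J" and u0: "V u \<noteq> 0"
  shows "V ` J \<subseteq> span {V u}"
proof
  fix x assume x: "x \<in> V ` J"
  show "x \<in> span {V u}"
  proof (rule ccontr)
    assume nx: "x \<notin> span {V u}"
    have "independent {V u}" using u0 by (simp add: independent_insertI)
    then have ind: "independent (insert x {V u})" using nx by (rule independent_insertI[rotated])
    have "x \<noteq> V u" using nx by (auto simp: span_base)
    then have "card (insert x {V u}) = 2" by simp
    moreover have "insert x {V u} \<subseteq> V ` J" using x u by auto
    ultimately have "2 \<le> dim (V ` J)" using independent_card_le_dim[OF _ ind] by metis
    then show False using d by simp
  qed
qed

lemma Ak: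
  fixes V :: "'i \<Rightarrow> 'a::euclidean_space"
  shows "finite J \<Longrightarrow> PC V J \<Longrightarrow> dim (V ` J) \<le> 2 * DD V J"
proof (induction "dim (V ` J)" arbitrary: J rule: less_induct)
  case less
  note fJ = less.prems(1) and pc = less.prems(2)
  consider "dim (V ` J) = 0" | "dim (V ` J) = 1" | "dim (V ` J) \<ge> 2" by linarith
  then show ?case
  proof cases
    case 1 then show ?thesis by (simp only:)
  next
    case 2
    then have "J \<noteq> {}" by auto
    then obtain u where u: "u \<in> J" by blast
    have u0: "V u \<noteq> 0" using pc u by (auto simp: PC_def)
    have pos: "V u \<bullet> V j > 0" if "j \<in> J" for j
      using line_pos[OF pc u that] dim_one_line[OF 2 u u0] that by blast
    have "Dv V J (\<lambda>x. V u \<bullet> x) = int (card J)"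
      using Dv_pos_all[of J "\<lambda>x. V u \<bullet> x" V] fJ pos by blast
    then have "nat \<bar>Dv V J (\<lambda>x. V u \<bullet> x)\<bar> = card J" by simp
    moreover have "card J \<ge> 1"
    proof -
      have "J \<noteq> {}" using u by auto
      then have "card J > 0" using fJ by (simp add: card_gt_0_iff)
      then show ?thesis by simp
    qed
    ultimately have "1 \<le> DD V J" using DD_ge[OF fJ lin_inner, of V "V u"] by simp
    then show ?thesis using 2 by simp
  next
    case 3
    obtain h1 h2 :: "'a \<Rightarrow> real" where hh: "linear h1" "linear h2"
        "dim (V ` J) - 2 \<le> dim (V ` {j\<in>J. h1 (V j) = 0 \<and> h2 (V j) = 0})" "Dv V {j\<in>J. h1 (V j) = 0} h2 \<noteq> 0"
      using Qk[OF 3 fJ pc refl] by blast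
    define J1 where "J1 = {j\<in>J. h1 (V j) = 0}"
    define J2 where "J2 = {j\<in>J1. h2 (V j) = 0}"
    have J2eq: "{j\<in>J. h1 (V j) = 0 \<and> h2 (V j) = 0} = J2" by (auto simp: J2_def J1_def)
    have fJ1: "finite J1" using fJ by (simp add: J1_def)
    have fJ2: "finite J2" using fJ1 by (simp add: J2_def)
    have dc1: "nat \<bar>Dv V J h1\<bar> + DD V J1 \<le> DD V J" using decomp[OF fJ hh(1), of V] by (simp add: J1_def)
    have dc2: "nat \<bar>Dv V J1 h2\<bar> + DD V J2 \<le> DD V J1" using decomp[OF fJ1 hh(2), of V] by (simp add: J2_def)
    have nz: "Dv V J1 h2 \<noteq> 0" using hh(4) by (simp add: J1_def)
    have sub: "J2 \<subseteq> J" by (auto simp: J2_def J1_def)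
    have lt: "dim (V ` J2) < dim (V ` J)"
    proof (rule ccontr)
      assume "\<not> dim (V ` J2) < dim (V ` J)"
      then have "dim (span (V ` J)) \<le> dim (span (V ` J2))" by simp
      moreover have "span (V ` J2) \<subseteq> span (V ` J)" using sub by (intro span_mono) auto
      ultimately have eqs: "span (V ` J2) = span (V ` J)"
        using subspace_dim_equal[of "span (V ` J2)" "span (V ` J)"] by (simp add: subspace_span)
      have van: "\<forall>b\<in>V ` J2. h2 b = 0" by (auto simp: J2_def)
      have "h2 (V j) = 0" if "j \<in> J1" for j
      proof -
        have "V j \<in> span (V ` J2)" using eqs that by (auto simp: J1_def span_base)
        then show ?thesis using lin_span0[OF hh(2) van] by blast
      qed
      then have "Dv V J1 h2 = 0" by (rule Dv_zero_part)
      then show False using nz by simp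
    qed
    have pc2: "PC V J2" using pc sub by (rule PC_subset)
    have IH: "dim (V ` J2) \<le> 2 * DD V J2" using less.hyps[OF lt fJ2 pc2] .
    have "1 \<le> nat \<bar>Dv V J1 h2\<bar>" using nz by simp
    then show ?thesis using dc1 dc2 IH hh(3) J2eq by simp
  qed
qed

theorem mainTheorem4:
  fixes V :: "'i \<Rightarrow> 'a::euclidean_space" and I :: "'i set"
  assumes "finite I"
  shows "\<exists>J \<subseteq> I. rank_conf V J \<le> 2 * DD V I \<and> DD V J = DD V I \<and> DD V (I - J) = 0"
proof -
  define J' where "J' = {j\<in>I. V j \<noteq> 0}"
  have fJ': "finite J'" using assms by (simp add: J'_def)
  obtain R where R: "R \<subseteq> J'" "NoOpp V {} R" "SymR V {} (J' - R)" using resid[OF fJ', of V "{}"] by blast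
  have RI: "R \<subseteq> I" using R(1) by (auto simp: J'_def)
  have fR: "finite R" using RI assms finite_subset by blast
  have pc: "PC V R" using R(1,2) by (auto simp: PC_def J'_def)
  have fIR: "finite (I - R)" using assms by simp
  have zero: "Dv V (I - R) f = 0" if f: "linear f" for f :: "'a \<Rightarrow> real"
  proof -
    have "Dv V (I - R) f = Dv V {j\<in>I - R. V j = 0} f + Dv V {j\<in>I - R. \<not> V j = 0} f"
      using Dv_split[OF fIR] .
    also have "Dv V {j\<in>I - R. V j = 0} f = 0"
      by (rule Dv_zero_part) (use f in \<open>auto simp: linear_0\<close>)
    also have "{j\<in>I - R. \<not> V j = 0} = {j \<in> J' - R. (\<lambda>x. 0::real) (V j) = 0}"
      by (auto simp: J'_def)
    also have "Dv V {j \<in> J' - R. (\<lambda>x. 0::real) (V j) = 0} f = 0"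
    proof -
      have s0: "linear (\<lambda>x::'a. 0::real)" by (simp add: linear_zero)
      show ?thesis using R(3) s0 f unfolding SymR_def by blast
    qed
    finally show ?thesis by simp
  qed
  have DvI: "Dv V I f = Dv V R f" if f: "linear f" for f :: "'a \<Rightarrow> real"
  proof -
    have "I = R \<union> (I - R)" using RI by auto
    then have "Dv V I f = Dv V (R \<union> (I - R)) f" by simp
    also have "\<dots> = Dv V R f + Dv V (I - R) f" using fR fIR by (intro Dv_union) auto
    finally show ?thesis using zero[OF f] by simp
  qed
  have "DD V R = DD V I"
  proof -
    have "{nat \<bar>Dv V I f\<bar> | f. linear f} = {nat \<bar>Dv V R f\<bar> | f. linear f}"
      using DvI by metis
    then show ?thesis by (simp add: DD_alt)
  qed
  moreover have "DD V (I - R) = 0"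
  proof -
    obtain f where f: "linear f" "DD V (I - R) = nat \<bar>Dv V (I - R) f\<bar>" using DD_attained[OF fIR] by blast
    then show ?thesis using zero by simp
  qed
  moreover have "rank_conf V R \<le> 2 * DD V R"
    using Ak[OF fR pc] by (simp add: rank_conf_def)
  ultimately show ?thesis using RI by (intro exI[of _ R]) simp
qed

end
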